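(* With $\overline{C}(\alpha)$ as defined in the context, $\overline{C}\left(\tfrac12\right)\ge 0.35047\,\pi^2$.
   Context: For a strictly increasing sequence $(\lambda_k)_{k=-\infty}^{\infty}$ of real numbers, put $\delta_k:=\min\{\lambda_k-\lambda_{k-1},\lambda_{k+1}-\lambda_k\}$. For $0\le\alpha\le2$, let $\overline{C}(\alpha)$ be the minimum of all constants $C(\alpha)$ such that $$\sum_{m=1}^N\sum_{\substack{n=1\\ n\ne m}}^N\frac{\delta_m^{2-\alpha}\delta_n^{\alpha}t_mt_n}{(\lambda_m-\lambda_n)^2}\le C(\alpha)\sum_{n=1}^N t_n^2$$ holds for every positive integer $N$, every strictly increasing real sequence $(\lambda_k)_{k\in\mathbb Z}$ and all nonnegative reals $t_1,\dots,t_N$; set $\overline{C}(\alpha)=\infty$ if no such real constant exists. *)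

theory Defs
  imports "HOL-Analysis.Analysis"
begin

definition gap :: "(int \<Rightarrow> real) \<Rightarrow> int \<Rightarrow> real" where
  "gap lam k = min (lam k - lam (k - 1)) (lam (k + 1) - lam k)"

definition admissible_const :: "real \<Rightarrow> real \<Rightarrow> bool" where
  "admissible_const \<alpha> C \<longleftrightarrow>
     (\<forall>(N::nat) (lam::int \<Rightarrow> real) (t::nat \<Rightarrow> real).
        N \<ge> 1 \<longrightarrow> strict_mono lam \<longrightarrow> (\<forall>n\<in>{1..N}. t n \<ge> 0) \<longrightarrow>
        (\<Sum>m=1..N. \<Sum>n\<in>{1..N} - {m}.
           gap lam (int m) powr (2 - \<alpha>) * gap lam (int n) powr \<alpha> * t m * t n
             / (lam (int m) - lam (int n))^2)
        \<le> C * (\<Sum>n=1..N. (t n)^2))"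

text \<open>The optimal constant; infinity if no admissible real constant exists.\<close>
definition Cbar :: "real \<Rightarrow> ereal" where
  "Cbar \<alpha> = Inf {ereal C | C. admissible_const \<alpha> C}"

end

theory Submission
  imports Defs
begin

lemma tele_step_inc:
  fixes y h :: real assumes "0 < y" "0 < h"
  shows "1/y - 1/(y+h) \<le> h / y^2"
proof -
  have "1/y - 1/(y+h) = h/(y*(y+h))" using assms by (simp add: field_simps)
  also have "\<dots> \<le> h/(y*y)" using assms by (intro divide_left_mono mult_left_mono) auto
  finally show ?thesis by (simp add: power2_eq_square)
qed

lemma riem_inc:
  fixes y0 h :: real assumes "0 < y0" "0 < h"
  shows "1/y0 - 1/(y0 + real m * h) \<le> (\<Sum>i<m. h / (y0 + real i * h)^2)"
proof (induction m)
  case 0 then show ?case by simp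
next
  case (Suc m)
  have y: "0 < y0 + real m * h" using assms by (simp add: add_pos_nonneg)
  have "1/y0 - 1/(y0 + real (Suc m) * h) = (1/y0 - 1/(y0 + real m * h)) + (1/(y0 + real m*h) - 1/(y0 + real m * h + h))"
    by (simp add: algebra_simps)
  also have "\<dots> \<le> (\<Sum>i<m. h / (y0 + real i * h)^2) + h/(y0 + real m * h)^2"
    using Suc tele_step_inc[OF y assms(2)] by linarith
  finally show ?case by simp
qed

lemma riem_dec:
  fixes z0 h :: real assumes "0 < h" "0 < z0 - real m * h + h"
  shows "1/(z0 - real m * h + h) - 1/(z0 + h) \<le> (\<Sum>i<m. h / (z0 - real i * h)^2)"
  using assms(2)
proof (induction m)
  case 0 then show ?case by simp
next
  case (Suc m)
  have y: "0 < z0 - real m * h" using Suc.prems by (simp add: algebra_simps)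
  have IH: "1/(z0 - real m * h + h) - 1/(z0 + h) \<le> (\<Sum>i<m. h / (z0 - real i * h)^2)"
    using Suc.IH y assms(1) by simp
  have "1/(z0 - real (Suc m) * h + h) - 1/(z0 + h) = (1/(z0 - real m * h) - 1/(z0 - real m * h + h)) + (1/(z0 - real m * h + h) - 1/(z0 + h))"
    by (simp add: algebra_simps)
  also have "\<dots> \<le> h/(z0 - real m * h)^2 + (\<Sum>i<m. h / (z0 - real i * h)^2)"
    using IH tele_step_inc[OF y assms(1)] by linarith
  finally show ?case by simp
qed

lemma tail_phi:
  fixes T c l th :: real and J0 J :: nat
  assumes T: "0 < T" and l: "0 \<le> l" and th: "0 \<le> th" and c1: "0 \<le> T - 2*th - l"
    and c2: "0 < real (Suc J0) * T + c - th"
    and c3: "(real (Suc J0) * T + c) * (real (Suc J0) * T + c + l) \<le> (real (Suc J0) * T + c - th) * (real (Suc J0) * T + c - th + T)"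
    and J: "J0 \<le> J"
  shows "l/T * (1/(real (Suc J0) * T + c - th) - 1/(real (Suc J) * T + c - th))
     \<le> (\<Sum>jj\<in>{Suc J0..J}. 1/(real jj * T + c) - 1/(real jj * T + c + l))"
proof -
  define H where "H jj = l/T * (1/(real jj * T + c - th))" for jj :: nat
  have step: "H jj - H (Suc jj) \<le> 1/(real jj * T + c) - 1/(real jj * T + c + l)" if jj: "Suc J0 \<le> jj" for jj
  proof -
    define y where "y = real jj * T + c"
    define y0 where "y0 = real (Suc J0) * T + c"
    have "y0 \<le> y" unfolding y_def y0_def using jj T by (intro add_right_mono mult_right_mono) auto
    have yth: "0 < y - th" using c2 \<open>y0 \<le> y\<close> unfolding y0_def by linarith
    have ypos: "0 < y" using yth th by linarith
    have key: "y * (y + l) \<le> (y - th) * (y - th + T)"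
    proof -
      have "(y - th) * (y - th + T) - y * (y + l) = y * (T - 2*th - l) + th*th - th*T" by (simp add: algebra_simps)
      also have "\<dots> \<ge> y0 * (T - 2*th - l) + th*th - th*T" using \<open>y0 \<le> y\<close> c1 by (simp add: mult_right_mono)
      moreover have "y0 * (T - 2*th - l) + th*th - th*T = (y0 - th) * (y0 - th + T) - y0 * (y0 + l)" by (simp add: algebra_simps)
      ultimately show ?thesis using c3 unfolding y0_def by linarith
    qed
    have e1: "real (Suc jj) * T + c - th = (y - th) + T" unfolding y_def by (simp add: algebra_simps)
    have "H jj - H (Suc jj) = l/T * (1/(y - th) - 1/((y - th) + T))"
      unfolding H_def e1 unfolding y_def by (simp add: right_diff_distrib)
    also have "\<dots> = l / ((y - th) * (y - th + T))"
      using T yth by (simp add: field_simps)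
    also have "\<dots> \<le> l / (y * (y + l))"
      using key ypos l yth T by (intro divide_left_mono) (auto intro!: mult_pos_pos)
    also have "\<dots> = 1/y - 1/(y + l)" using ypos l by (simp add: field_simps)
    finally show ?thesis unfolding y_def .
  qed
  have "(\<Sum>jj\<in>{Suc J0..J}. H jj - H (Suc jj)) = H (Suc J0) - H (Suc J)"
    using sum_Suc_diff[of "Suc J0" J "\<lambda>i. - H i"] J by simp
  moreover have "(\<Sum>jj\<in>{Suc J0..J}. H jj - H (Suc jj)) \<le> (\<Sum>jj\<in>{Suc J0..J}. 1/(real jj * T + c) - 1/(real jj * T + c + l))"
    by (intro sum_mono step) auto
  ultimately show ?thesis unfolding H_def by (simp add: right_diff_distrib)
qed

lemma tail_sq:
  fixes T c th :: real and J0 J :: nat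
  assumes T: "0 < T" and th: "0 \<le> th" and c1: "0 \<le> T - 2*th"
    and c2: "0 < real (Suc J0) * T + c - th"
    and c3: "(real (Suc J0) * T + c)^2 \<le> (real (Suc J0) * T + c - th) * (real (Suc J0) * T + c - th + T)"
    and J: "J0 \<le> J"
  shows "1/T * (1/(real (Suc J0) * T + c - th) - 1/(real (Suc J) * T + c - th))
     \<le> (\<Sum>jj\<in>{Suc J0..J}. 1/(real jj * T + c)^2)"
proof -
  define H where "H jj = 1/T * (1/(real jj * T + c - th))" for jj :: nat
  have step: "H jj - H (Suc jj) \<le> 1/(real jj * T + c)^2" if jj: "Suc J0 \<le> jj" for jj
  proof -
    define y where "y = real jj * T + c"
    define y0 where "y0 = real (Suc J0) * T + c"
    have "y0 \<le> y" unfolding y_def y0_def using jj T by (intro add_right_mono mult_right_mono) auto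
    have yth: "0 < y - th" using c2 \<open>y0 \<le> y\<close> unfolding y0_def by linarith
    have ypos: "0 < y" using yth th by linarith
    have key: "y * y \<le> (y - th) * (y - th + T)"
    proof -
      have "(y - th) * (y - th + T) - y * y = y * (T - 2*th) + th*th - th*T" by (simp add: algebra_simps)
      also have "\<dots> \<ge> y0 * (T - 2*th) + th*th - th*T" using \<open>y0 \<le> y\<close> c1 by (simp add: mult_right_mono)
      moreover have "y0 * (T - 2*th) + th*th - th*T = (y0 - th) * (y0 - th + T) - y0 * y0" by (simp add: algebra_simps)
      ultimately show ?thesis using c3 unfolding y0_def by (simp add: power2_eq_square)
    qed
    have e1: "real (Suc jj) * T + c - th = (y - th) + T" unfolding y_def by (simp add: algebra_simps)
    have "H jj - H (Suc jj) = 1/T * (1/(y - th) - 1/((y - th) + T))"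
      unfolding H_def e1 unfolding y_def by (simp add: right_diff_distrib)
    also have "\<dots> = 1 / ((y - th) * (y - th + T))"
      using T yth by (simp add: field_simps)
    also have "\<dots> \<le> 1 / (y * y)"
      using key ypos yth T by (intro divide_left_mono) (auto intro!: mult_pos_pos)
    finally show ?thesis unfolding y_def by (simp add: power2_eq_square)
  qed
  have "(\<Sum>jj\<in>{Suc J0..J}. H jj - H (Suc jj)) = H (Suc J0) - H (Suc J)"
    using sum_Suc_diff[of "Suc J0" J "\<lambda>i. - H i"] J by simp
  moreover have "(\<Sum>jj\<in>{Suc J0..J}. H jj - H (Suc jj)) \<le> (\<Sum>jj\<in>{Suc J0..J}. 1/(real jj * T + c)^2)"
    by (intro sum_mono step) auto
  ultimately show ?thesis unfolding H_def by (simp add: right_diff_distrib)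
qed

lemma sum_int_symm:
  fixes f :: "int \<Rightarrow> real"
  shows "(\<Sum>j\<in>{- int J..int J}. f j) = f 0 + (\<Sum>jj\<in>{1..J}. f (int jj) + f (- int jj))"
proof (induction J)
  case 0 then show ?case by simp
next
  case (Suc J)
  have "{- int (Suc J)..int (Suc J)} = insert (- int (Suc J)) (insert (int (Suc J)) {- int J..int J})"
    by auto
  then have "(\<Sum>j\<in>{- int (Suc J)..int (Suc J)}. f j) = f (- int (Suc J)) + f (int (Suc J)) + (\<Sum>j\<in>{- int J..int J}. f j)"
    by simp
  also have "\<dots> = f 0 + (\<Sum>jj\<in>{1..Suc J}. f (int jj) + f (- int jj))"
    using Suc by simp
  finally show ?case .
qed

lemma zeta2_partial:
  assumes D: "1 \<le> D"
  shows "pi^2/6 - 1/real D \<le> (\<Sum>d\<in>{1..D}. 1/(real d)^2)"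
proof -
  have s: "(\<lambda>n. 1 / real ((n + 1)\<^sup>2)) sums (pi\<^sup>2 / 6)" by (rule inverse_squares_sums)
  have tail: "(\<lambda>n. 1 / real ((n + D + 1)\<^sup>2)) sums (pi\<^sup>2 / 6 - (\<Sum>n<D. 1 / real ((n + 1)\<^sup>2)))"
    using sums_split_initial_segment[OF s, of D] by (simp add: algebra_simps)
  have lim: "(\<lambda>n. 1/real (n + D)) \<longlonglongrightarrow> 0"
    using LIMSEQ_ignore_initial_segment[OF lim_inverse_n', of D] by simp
  have tele: "(\<lambda>n. 1/real (n + D) - 1/real (Suc n + D)) sums (1/real (0 + D) - 0)"
    by (rule telescope_sums'[OF lim])
  have le: "1 / real ((n + D + 1)\<^sup>2) \<le> 1/real (n + D) - 1/real (Suc n + D)" for n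
  proof -
    have p: "0 < real (n + D)" using D by simp
    have "1/real (n + D) - 1/real (Suc n + D) = 1/(real (n+D) * (real (n+D) + 1))"
      using p by (simp add: field_simps)
    also have "\<dots> \<ge> 1/((real (n+D) + 1) * (real (n+D) + 1))"
      using p by (intro divide_left_mono mult_right_mono) auto
    finally have "1/((real (n+D) + 1) * (real (n+D) + 1)) \<le> 1/real (n + D) - 1/real (Suc n + D)" .
    moreover have "real ((n + D + 1)\<^sup>2) = (real (n+D) + 1) * (real (n+D) + 1)" by (simp add: power2_eq_square algebra_simps)
    ultimately show ?thesis by simp
  qed
  have "pi\<^sup>2 / 6 - (\<Sum>n<D. 1 / real ((n + 1)\<^sup>2)) \<le> 1/real D"
    using sums_le[OF le tail tele] by simp
  moreover have "(\<Sum>n<D. 1 / real ((n + 1)\<^sup>2)) = (\<Sum>d\<in>{1..D}. 1/(real d)^2)"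
  proof -
    have "(\<Sum>d\<in>{1..D}. 1/(real d)^2) = (\<Sum>n<D. 1/(real (Suc n))^2)"
      using sum.atLeast1_atMost_eq[of "\<lambda>d. 1/(real d)^2" D] by simp
    then show ?thesis by simp
  qed
  ultimately show ?thesis by simp
qed

lemma divmod_int_decomp:
  fixes q r M :: int assumes "0 \<le> r" "r < M"
  shows "(q * M + r) div M = q" "(q * M + r) mod M = r"
proof -
  have M: "0 < M" using assms by linarith
  show "(q * M + r) div M = q"
    using assms M by (metis add.commute div_pos_pos_trivial div_mult_self1 less_irrefl add_0 mult.commute)
  show "(q * M + r) mod M = r"
    using assms M by (metis add.commute mod_pos_pos_trivial mod_mult_self2 mult.commute)
qed

definition nn :: nat where "nn = 10^13"
definition MM :: nat where "MM = 10*nn + 6"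
definition hh :: real where "hh = 3/(25 * real nn)"
definition TT :: real where "TT = 36/5"

lemma nn_pos: "0 < nn" by (simp add: nn_def)
lemma hh_pos: "0 < hh" by (simp add: hh_def nn_pos)
lemma hh_small: "hh \<le> 1/10^7" by (simp add: hh_def nn_def)
lemma hh_le1: "hh \<le> 1" using hh_small by simp
lemma MM_ge: "6 \<le> MM" by (simp add: MM_def)
lemma len10: "real (10*nn) * hh = 6/5" using nn_pos by (simp add: hh_def)
lemma len2: "real (2*nn) * hh = 6/25" using nn_pos by (simp add: hh_def)
lemma len8: "real (8*nn) * hh = 24/25" using nn_pos by (simp add: hh_def)

lemma MM_big: "100 \<le> MM" by (simp add: MM_def nn_def)

definition posv :: "nat \<Rightarrow> real" where "posv r = (if r < 5 then real r else 5 + real (r-5) * hh)"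
definition lamc :: "int \<Rightarrow> real" where
  "lamc k = real_of_int (k div int MM) * TT + posv (nat (k mod int MM))"
definition stepv :: "nat \<Rightarrow> real" where "stepv r = (if r < 5 then 1 else if r < MM - 1 then hh else 1)"
definition gapv :: "nat \<Rightarrow> real" where "gapv r = (if r < 5 then 1 else hh)"

lemma lamc_qr: assumes "0 \<le> r" "r < int MM"
  shows "lamc (q * int MM + r) = real_of_int q * TT + posv (nat r)"
  unfolding lamc_def using divmod_int_decomp[OF assms] by simp

lemma posv_step: assumes "r + 1 < MM" shows "posv (r+1) - posv r = stepv r"
proof -
  have "r < 4 \<or> r = 4 \<or> 5 \<le> r" by linarith
  then show ?thesis
  proof (elim disjE)
    assume "r < 4" then show ?thesis by (simp add: posv_def stepv_def)
  next
    assume "r = 4" then show ?thesis by (simp add: posv_def stepv_def)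
  next
    assume r: "5 \<le> r"
    then have "real (r + 1 - 5) = real (r - 5) + 1" by (simp add: of_nat_diff)
    then show ?thesis using r assms by (simp add: posv_def stepv_def algebra_simps)
  qed
qed

lemma posv_last: "TT - posv (MM - 1) = 1"
proof -
  have "MM - 1 - 5 = 10 * nn" by (simp add: MM_def)
  then have "posv (MM - 1) = 5 + 6/5" using len10 MM_big by (simp add: posv_def)
  then show ?thesis by (simp add: TT_def)
qed

lemma lamc_step: "lamc (k+1) - lamc k = stepv (nat (k mod int MM))"
proof -
  define q where "q = k div int MM"
  define r where "r = k mod int MM"
  have M0: "0 < int MM" using MM_ge by simp
  have r0: "0 \<le> r" "r < int MM" unfolding r_def using M0 by auto
  have k: "k = q * int MM + r" unfolding q_def r_def by simp
  have lk: "lamc k = real_of_int q * TT + posv (nat r)" unfolding k by (rule lamc_qr[OF r0])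
  show ?thesis
  proof (cases "r + 1 < int MM")
    case True
    have "k + 1 = q * int MM + (r + 1)" unfolding k by simp
    then have "lamc (k+1) = lamc (q * int MM + (r + 1))" by (simp only:)
    also have "\<dots> = real_of_int q * TT + posv (nat (r+1))"
      using True r0 by (intro lamc_qr) auto
    finally have "lamc (k+1) = real_of_int q * TT + posv (nat (r+1))" .
    moreover have "posv (nat (r+1)) - posv (nat r) = stepv (nat r)"
      using posv_step[of "nat r"] True r0 by (simp add: nat_add_distrib)
    ultimately show ?thesis using lk unfolding r_def[symmetric] by simp
  next
    case False
    then have rM: "r = int MM - 1" using r0 by simp
    have "k + 1 = (q + 1) * int MM + 0" unfolding k rM by (simp add: algebra_simps)
    then have "lamc (k+1) = real_of_int (q+1) * TT + posv 0"
      using lamc_qr[of 0 "q+1"] M0 by simp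
    moreover have "nat r = MM - 1" using rM MM_ge by simp
    ultimately have "lamc (k+1) - lamc k = TT - posv (MM - 1)"
      using lk by (simp add: posv_def algebra_simps)
    also have "\<dots> = 1" by (rule posv_last)
    also have "1 = stepv (MM - 1)" using MM_big by (simp add: stepv_def)
    finally show ?thesis using \<open>nat r = MM - 1\<close> unfolding r_def by simp
  qed
qed

lemma gap_lamc: "gap lamc k = gapv (nat (k mod int MM))"
proof -
  define r where "r = k mod int MM"
  have M0: "0 < int MM" using MM_ge by simp
  have r0: "0 \<le> r" "r < int MM" unfolding r_def using M0 by auto
  have s1: "lamc (k+1) - lamc k = stepv (nat r)" unfolding r_def by (rule lamc_step)
  have s0: "lamc k - lamc (k-1) = stepv (nat ((k-1) mod int MM))"
    using lamc_step[of "k-1"] by simp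
  have km: "(k - 1) mod int MM = (if r = 0 then int MM - 1 else r - 1)"
  proof -
    have k: "k = (k div int MM) * int MM + r" unfolding r_def by simp
    show ?thesis
    proof (cases "r = 0")
      case True
      have e: "k - 1 = (k div int MM - 1) * int MM + (int MM - 1)" using k True by (simp add: algebra_simps)
      have "(k - 1) mod int MM = int MM - 1"
        by (subst e, rule divmod_int_decomp(2)) (use M0 in auto)
      then show ?thesis using True by simp
    next
      case False
      have e: "k - 1 = (k div int MM) * int MM + (r - 1)" using k by simp
      have "(k - 1) mod int MM = r - 1"
        by (subst e, rule divmod_int_decomp(2)) (use False r0 in auto)
      then show ?thesis using False by simp
    qed
  qed
  have "gap lamc k = min (stepv (nat ((k-1) mod int MM))) (stepv (nat r))"
    unfolding gap_def using s0 s1 by simp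
  also have "\<dots> = gapv (nat r)"
  proof -
    have c: "r = 0 \<or> (1 \<le> r \<and> r \<le> 4) \<or> r = 5 \<or> (6 \<le> r \<and> r < int MM - 1) \<or> r = int MM - 1"
      using r0 by linarith
    from c show ?thesis
    proof (elim disjE conjE)
      assume "r = 0" then show ?thesis using km MM_big by (simp add: stepv_def gapv_def nat_diff_distrib)
    next
      assume a: "1 \<le> r" "r \<le> 4"
      then have "nat (r - 1) < 5" "nat r < 5" by linarith+
      then show ?thesis using km a by (simp add: stepv_def gapv_def)
    next
      assume "r = 5" then show ?thesis using km MM_big hh_le1 by (simp add: stepv_def gapv_def min_def)
    next
      assume a: "6 \<le> r" "r < int MM - 1"
      then have "nat (r - 1) < MM - 1" "nat r < MM - 1" "\<not> nat (r-1) < 5" "\<not> nat r < 5" by linarith+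
      then show ?thesis using km a by (simp add: stepv_def gapv_def)
    next
      assume a: "r = int MM - 1"
      then have "nat (r - 1) < MM - 1" "\<not> nat r < MM - 1" "\<not> nat (r-1) < 5" "\<not> nat r < 5" using MM_big by linarith+
      then show ?thesis using km a MM_big hh_le1 by (simp add: stepv_def gapv_def min_def)
    qed
  qed
  finally show ?thesis unfolding r_def .
qed

definition KK :: nat where "KK = 10^13"
definition JJ :: nat where "JJ = 10^6"
definition NN :: nat where "NN = KK * MM"

definition bw :: "nat \<Rightarrow> real" where
  "bw r = (if r = 0 \<or> r = 4 then 333/2000 else if r = 1 \<or> r = 3 then 83/500 else 413/2500)"
definition gw :: "nat \<Rightarrow> real" where
  "gw i = (if i < 2*nn then 9201/10000 else if i < 8*nn then 1989/2500 else if i < 10*nn then 9201/10000 else 0)"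
definition wv :: "nat \<Rightarrow> real" where "wv r = (if r < 5 then bw r else sqrt hh * gw (r - 5))"
definition tc :: "nat \<Rightarrow> real" where "tc k = wv (k mod MM)"

definition Gt :: "nat \<Rightarrow> nat \<Rightarrow> real" where
  "Gt m n = gap lamc (int m) powr (2 - 1/2) * gap lamc (int n) powr (1/2) * tc m * tc n
             / (lamc (int m) - lamc (int n))^2"
definition G0 :: "int \<Rightarrow> nat \<Rightarrow> nat \<Rightarrow> real" where
  "G0 j r r' = gapv r powr (2 - 1/2) * gapv r' powr (1/2) * wv r * wv r'
             / (real_of_int j * TT + posv r' - posv r)^2"

lemma bw_nonneg: "0 \<le> bw r" by (simp add: bw_def)
lemma gw_nonneg: "0 \<le> gw r" by (simp add: gw_def)
lemma wv_nonneg: "0 \<le> wv r" using bw_nonneg gw_nonneg hh_pos by (simp add: wv_def)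
lemma tc_nonneg: "0 \<le> tc k" by (simp add: tc_def wv_nonneg)
lemma Gt_nonneg: "0 \<le> Gt m n" unfolding Gt_def using tc_nonneg by (intro divide_nonneg_nonneg mult_nonneg_nonneg) auto
lemma G0_nonneg: "0 \<le> G0 j r r'" unfolding G0_def using wv_nonneg by (intro divide_nonneg_nonneg mult_nonneg_nonneg) auto

lemma nat_divmod: assumes "r < (M::nat)" shows "(q * M + r) div M = q" "(q * M + r) mod M = r"
  using assms by auto

lemma per_facts: assumes "r < MM"
  shows "lamc (int (q * MM + r)) = real q * TT + posv r"
        "gap lamc (int (q * MM + r)) = gapv r"
        "tc (q * MM + r) = wv r"
proof -
  have e: "int (q * MM + r) = int q * int MM + int r" by simp
  show "lamc (int (q * MM + r)) = real q * TT + posv r"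
    unfolding e using lamc_qr[of "int r" "int q"] assms by simp
  show "gap lamc (int (q * MM + r)) = gapv r"
    unfolding gap_lamc e using divmod_int_decomp(2)[of "int r" "int MM" "int q"] assms by simp
  show "tc (q * MM + r) = wv r" unfolding tc_def using assms by simp
qed

lemma Gt_G0: assumes "r < MM" "r' < MM" "0 \<le> int q + j"
  shows "Gt (q * MM + r) (nat (int q + j) * MM + r') = G0 j r r'"
proof -
  have rq: "real (nat (int q + j)) = real q + real_of_int j" using assms(3) by simp
  have "(real q * TT + posv r - (real (nat (int q + j)) * TT + posv r'))^2 = (real_of_int j * TT + posv r' - posv r)^2"
    unfolding rq by (simp add: power2_eq_square algebra_simps)
  then show ?thesis unfolding Gt_def G0_def per_facts[OF assms(1)] per_facts[OF assms(2)] by simp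
qed

definition Qw :: "nat set" where "Qw = {JJ+1..KK-JJ-1}"
definition XX :: "(int \<times> nat \<times> nat) set" where "XX = {- int JJ..int JJ} \<times> ({..<MM} \<times> {..<MM})"
definition F0 :: "int \<times> nat \<times> nat \<Rightarrow> real" where
  "F0 y = (case y of (j, r, r') \<Rightarrow> if j = 0 \<and> r' = r then 0 else G0 j r r')"
definition Phi :: real where "Phi = (\<Sum>y\<in>XX. F0 y)"
definition phi :: "nat \<times> int \<times> nat \<times> nat \<Rightarrow> nat \<times> nat" where
  "phi x = (case x of (q, j, r, r') \<Rightarrow> (q * MM + r, nat (int q + j) * MM + r'))"

lemma KK_JJ: "4 * JJ + 4 \<le> KK" by (simp add: KK_def JJ_def)

lemma LHS_ge: "real (card Qw) * Phi \<le> (\<Sum>m=1..NN. \<Sum>n\<in>{1..NN}-{m}. Gt m n)"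
proof -
  define P where "P = (SIGMA m:{1..NN}. {1..NN}-{m})"
  have S: "(\<Sum>m=1..NN. \<Sum>n\<in>{1..NN}-{m}. Gt m n) = (\<Sum>p\<in>P. case p of (m, n) \<Rightarrow> Gt m n)"
    unfolding P_def by (rule sum.Sigma) auto
  define cnd where "cnd x = (case x of (q::nat, j::int, r::nat, r'::nat) \<Rightarrow> \<not> (j = 0 \<and> r' = r))" for x
  define I where "I = {x \<in> Qw \<times> XX. cnd x}"
  have finI: "finite (Qw \<times> XX)" unfolding Qw_def XX_def by auto
  have M0: "0 < MM" using MM_ge by simp
  have inj: "inj_on phi I"
  proof (rule inj_onI)
    fix x y assume x: "x \<in> I" and y: "y \<in> I" and e: "phi x = phi y"
    obtain q1 j1 r1 s1 where x1: "x = (q1, j1, r1, s1)" by (cases x) auto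
    obtain q2 j2 r2 s2 where y1: "y = (q2, j2, r2, s2)" by (cases y) auto
    have b1: "r1 < MM" "s1 < MM" "0 \<le> int q1 + j1" using x unfolding I_def x1 XX_def Qw_def by auto
    have b2: "r2 < MM" "s2 < MM" "0 \<le> int q2 + j2" using y unfolding I_def y1 XX_def Qw_def by auto
    have e1: "q1 * MM + r1 = q2 * MM + r2" and e2: "nat (int q1 + j1) * MM + s1 = nat (int q2 + j2) * MM + s2"
      using e unfolding phi_def x1 y1 by auto
    have "q1 = q2" using nat_divmod(1)[OF b1(1), of q1] nat_divmod(1)[OF b2(1), of q2] e1 by simp
    moreover have "r1 = r2" using nat_divmod(2)[OF b1(1), of q1] nat_divmod(2)[OF b2(1), of q2] e1 by simp
    moreover have "nat (int q1 + j1) = nat (int q2 + j2)"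
      using nat_divmod(1)[OF b1(2), of "nat (int q1 + j1)"] nat_divmod(1)[OF b2(2), of "nat (int q2 + j2)"] e2 by simp
    moreover have "s1 = s2"
      using nat_divmod(2)[OF b1(2), of "nat (int q1 + j1)"] nat_divmod(2)[OF b2(2), of "nat (int q2 + j2)"] e2 by simp
    ultimately show "x = y" unfolding x1 y1 using b1 b2 by auto
  qed
  have sub: "phi ` I \<subseteq> P"
  proof
    fix p assume "p \<in> phi ` I"
    then obtain x where x: "x \<in> I" and p: "p = phi x" by auto
    obtain q j r s where x1: "x = (q, j, r, s)" by (cases x) auto
    have q: "JJ + 1 \<le> q" "q \<le> KK - JJ - 1" and j: "- int JJ \<le> j" "j \<le> int JJ"
      and rs: "r < MM" "s < MM" and c: "\<not> (j = 0 \<and> s = r)"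
      using x unfolding I_def x1 XX_def Qw_def cnd_def by auto
    define q' where "q' = nat (int q + j)"
    have q'1: "1 \<le> q'" "q' \<le> KK - 1" "int q' = int q + j" unfolding q'_def using q j KK_JJ by auto
    have m1: "1 \<le> q * MM + r" using q M0 by (simp add: add_increasing2 less_eq_Suc_le[symmetric] mult_pos_pos)
    have "q * MM + r < (q + 1) * MM" using rs by simp
    also have "\<dots> \<le> KK * MM" using q KK_JJ by (intro mult_right_mono) auto
    finally have m2: "q * MM + r \<le> NN" unfolding NN_def by simp
    have n1: "1 \<le> q' * MM + s" using q'1 M0 by (simp add: add_increasing2 less_eq_Suc_le[symmetric] mult_pos_pos)
    have "q' * MM + s < (q' + 1) * MM" using rs by simp
    also have "\<dots> \<le> KK * MM" using q'1 KK_JJ by (intro mult_right_mono) auto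
    finally have n2: "q' * MM + s \<le> NN" unfolding NN_def by simp
    have ne: "q * MM + r \<noteq> q' * MM + s"
    proof
      assume h: "q * MM + r = q' * MM + s"
      then have "q = q'" using nat_divmod(1)[OF rs(1), of q] nat_divmod(1)[OF rs(2), of q'] by simp
      moreover have "r = s" using h nat_divmod(2)[OF rs(1), of q] nat_divmod(2)[OF rs(2), of q'] by simp
      ultimately show False using c q'1(3) by simp
    qed
    show "p \<in> P" unfolding p x1 phi_def P_def using m1 m2 n1 n2 ne q'_def by auto
  qed
  have nonneg: "\<And>p. p \<in> P - phi ` I \<Longrightarrow> 0 \<le> (case p of (m, n) \<Rightarrow> Gt m n)" using Gt_nonneg by auto
  have "(\<Sum>x\<in>I. (case phi x of (m, n) \<Rightarrow> Gt m n)) = (\<Sum>p\<in>phi ` I. case p of (m, n) \<Rightarrow> Gt m n)"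
    using sum.reindex[OF inj, of "\<lambda>p. case p of (m, n) \<Rightarrow> Gt m n"] by (simp add: comp_def)
  also have "\<dots> \<le> (\<Sum>p\<in>P. case p of (m, n) \<Rightarrow> Gt m n)"
    by (rule sum_mono2[OF _ sub nonneg]) (simp add: P_def)
  finally have A: "(\<Sum>x\<in>I. (case phi x of (m, n) \<Rightarrow> Gt m n)) \<le> (\<Sum>m=1..NN. \<Sum>n\<in>{1..NN}-{m}. Gt m n)"
    using S by simp
  have "(\<Sum>x\<in>I. (case phi x of (m, n) \<Rightarrow> Gt m n)) = (\<Sum>x\<in>Qw \<times> XX. if cnd x then (case phi x of (m, n) \<Rightarrow> Gt m n) else 0)"
    unfolding I_def by (rule sum.inter_filter[OF finI])
  also have "\<dots> = (\<Sum>q\<in>Qw. \<Sum>y\<in>XX. if cnd (q, y) then (case phi (q, y) of (m, n) \<Rightarrow> Gt m n) else 0)"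
  proof -
    define H where "H x = (if cnd x then (case phi x of (m, n) \<Rightarrow> Gt m n) else 0)" for x
    have "(\<Sum>q\<in>Qw. \<Sum>y\<in>XX. H (q, y)) = (\<Sum>x\<in>Qw \<times> XX. H x)"
      by (subst sum.cartesian_product) (simp add: case_prod_eta)
    then show ?thesis unfolding H_def by simp
  qed
  also have "\<dots> = (\<Sum>q\<in>Qw. Phi)"
  proof (rule sum.cong[OF refl])
    fix q assume q: "q \<in> Qw"
    show "(\<Sum>y\<in>XX. if cnd (q, y) then (case phi (q, y) of (m, n) \<Rightarrow> Gt m n) else 0) = Phi"
      unfolding Phi_def
    proof (rule sum.cong[OF refl])
      fix y assume y: "y \<in> XX"
      obtain j r s where y1: "y = (j, r, s)" by (cases y) auto
      have b: "r < MM" "s < MM" "0 \<le> int q + j" using y q KK_JJ unfolding y1 XX_def Qw_def by auto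
      show "(if cnd (q, y) then (case phi (q, y) of (m, n) \<Rightarrow> Gt m n) else 0) = F0 y"
        unfolding y1 cnd_def phi_def F0_def using Gt_G0[OF b] by simp
    qed
  qed
  also have "\<dots> = real (card Qw) * Phi" by simp
  finally show ?thesis using A by simp
qed

lemma sum_mod_lt: "(\<Sum>k<K*M. f (k mod M)) = real K * (\<Sum>r<M. (f r :: real))"
proof (induction K)
  case 0 then show ?case by simp
next
  case (Suc K)
  have "(\<Sum>k<Suc K*M. f (k mod M)) = (\<Sum>k\<in>{0..<K*M}. f (k mod M)) + (\<Sum>k\<in>{K*M..<K*M+M}. f (k mod M))"
    by (subst sum.atLeastLessThan_concat) (auto simp: atLeast0LessThan add.commute)
  also have "(\<Sum>k\<in>{K*M..<K*M+M}. f (k mod M)) = (\<Sum>r<M. f r)"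
    using sum.shift_bounds_nat_ivl[of "\<lambda>k. f (k mod M)" 0 "K*M" M] by (simp add: atLeast0LessThan add.commute)
  finally show ?case using Suc by (simp add: atLeast0LessThan algebra_simps)
qed

lemma sum_mod_1: assumes "0 < M"
  shows "(\<Sum>k=1..K*M. f (k mod M)) = real K * (\<Sum>r<M. (f r :: real))"
proof -
  have "(\<Sum>k=1..K*M. f (k mod M)) = (\<Sum>k<K*M. f (k mod M))"
  proof (cases K)
    case 0 then show ?thesis by simp
  next
    case (Suc K')
    have A: "{1..K*M} = insert (K*M) ({..<K*M} - {0})" using assms Suc by auto
    have B: "{..<K*M} = insert 0 ({..<K*M} - {0})" using assms Suc by auto
    have "(\<Sum>k\<in>{1..K*M}. f (k mod M)) = f (K*M mod M) + (\<Sum>k\<in>{..<K*M} - {0}. f (k mod M))"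
      by (subst A, rule sum.insert) auto
    moreover have "(\<Sum>k<K*M. f (k mod M)) = f (0 mod M) + (\<Sum>k\<in>{..<K*M} - {0}. f (k mod M))"
      by (subst B, rule sum.insert) auto
    ultimately show ?thesis by simp
  qed
  then show ?thesis using sum_mod_lt by simp
qed

lemma sum_const_ivl: assumes "\<And>i. a \<le> i \<Longrightarrow> i < b \<Longrightarrow> f i = (c::real)"
  shows "(\<Sum>i\<in>{a..<b}. f i) = real (b - a) * c"
  using assms by (simp add: sum.cong[of "{a..<b}" "{a..<b}" f "\<lambda>_. c"])

definition sigma_val :: real where
  "sigma_val = 2*(333/2000)^2 + 2*(83/500)^2 + (413/2500)^2 + 6/25*(9201/10000)^2 + 18/25*(1989/2500)^2 + 6/25*(9201/10000)^2"

lemma sum_wv2: "(\<Sum>r<MM. (wv r)^2) = sigma_val"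
proof -
  have M: "MM = 5 + (10*nn + 1)" by (simp add: MM_def)
  have "(\<Sum>r<MM. (wv r)^2) = (\<Sum>r<5. (wv r)^2) + (\<Sum>r\<in>{5..<MM}. (wv r)^2)"
    using sum.atLeastLessThan_concat[of 0 5 MM "\<lambda>r. (wv r)^2"] MM_ge by (simp add: atLeast0LessThan)
  also have "(\<Sum>r<5. (wv r)^2) = 2*(333/2000)^2 + 2*(83/500)^2 + (413/2500)^2"
    by (simp add: numeral_eq_Suc wv_def bw_def)
  also have "(\<Sum>r\<in>{5..<MM}. (wv r)^2) = (\<Sum>i<10*nn+1. hh * (gw i)^2)"
  proof -
    have "(\<Sum>r\<in>{5..<MM}. (wv r)^2) = (\<Sum>i\<in>{0..<10*nn+1}. (wv (i+5))^2)"
      unfolding M using sum.shift_bounds_nat_ivl[of "\<lambda>r. (wv r)^2" 0 5 "10*nn+1"] by (simp add: add.commute)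
    also have "\<dots> = (\<Sum>i<10*nn+1. hh * (gw i)^2)"
      using hh_pos by (intro sum.cong) (auto simp: wv_def power_mult_distrib)
    finally show ?thesis .
  qed
  also have "(\<Sum>i<10*nn+1. hh * (gw i)^2) = hh * (real (2*nn) * (9201/10000)^2 + real (6*nn) * (1989/2500)^2 + real (2*nn) * (9201/10000)^2)"
  proof -
    have s: "(\<Sum>i<10*nn+1. (gw i)^2) = (\<Sum>i\<in>{0..<2*nn}. (gw i)^2) + (\<Sum>i\<in>{2*nn..<8*nn}. (gw i)^2) + (\<Sum>i\<in>{8*nn..<10*nn}. (gw i)^2) + (gw (10*nn))^2"
      by (simp add: sum.atLeastLessThan_concat atLeast0LessThan[symmetric])
    have a: "(\<Sum>i\<in>{0..<2*nn}. (gw i)^2) = real (2*nn) * (9201/10000)^2" by (subst sum_const_ivl[where c="(9201/10000)^2"]) (auto simp: gw_def)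
    have b: "(\<Sum>i\<in>{2*nn..<8*nn}. (gw i)^2) = real (6*nn) * (1989/2500)^2" by (subst sum_const_ivl[where c="(1989/2500)^2"]) (auto simp: gw_def)
    have c: "(\<Sum>i\<in>{8*nn..<10*nn}. (gw i)^2) = real (2*nn) * (9201/10000)^2" by (subst sum_const_ivl[where c="(9201/10000)^2"]) (auto simp: gw_def)
    have d: "gw (10*nn) = 0" by (simp add: gw_def)
    show ?thesis unfolding sum_distrib_left[symmetric] s a b c d by simp
  qed
  also have "\<dots> = 6/25*(9201/10000)^2 + 18/25*(1989/2500)^2 + 6/25*(9201/10000)^2"
  proof -
    have hn: "hh * real nn = 3/25" using nn_pos by (simp add: hh_def)
    have "hh * (real (2*nn) * (9201/10000)^2 + real (6*nn) * (1989/2500)^2 + real (2*nn) * (9201/10000)^2)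
       = (hh * real nn) * (2 * (9201/10000)^2 + 6 * (1989/2500)^2 + 2 * (9201/10000)^2)"
      by (simp add: algebra_simps)
    then show ?thesis unfolding hn by simp
  qed
  finally show ?thesis unfolding sigma_val_def by (simp only: add.assoc)
qed

lemma sum_tc2: "(\<Sum>n=1..NN. (tc n)^2) = real KK * sigma_val"
  unfolding NN_def tc_def using sum_mod_1[of MM "\<lambda>r. (wv r)^2" KK] MM_ge sum_wv2 by simp

definition ph :: "real \<Rightarrow> real \<Rightarrow> real" where "ph l y = 1/y - 1/(y + l)"

lemma ph_mono: assumes "0 < y" "y \<le> y'" "0 \<le> l" shows "ph l y' \<le> ph l y"
proof -
  have "ph l y = l / (y * (y + l))" "ph l y' = l / (y' * (y' + l))"
    using assms by (simp_all add: ph_def field_simps)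
  moreover have "l / (y' * (y' + l)) \<le> l / (y * (y + l))"
    using assms by (intro divide_left_mono mult_mono) auto
  ultimately show ?thesis by simp
qed

lemma LD_generic:
  fixes h h0 T a :: real and m J :: nat
  assumes h: "0 < h" "h \<le> h0" and a: "0 < a" and T: "real m * h + a < T"
  shows "ph (real m * h) a + (\<Sum>jj\<in>{1..J}. ph (real m * h) (real jj * T + a) + ph (real m * h) (real jj * T - a - real m * h + h0))
     \<le> (\<Sum>j\<in>{- int J..int J}. \<Sum>i<m. h / (real_of_int j * T + a + real i * h)^2)"
proof -
  define l where "l = real m * h"
  have l0: "0 \<le> l" unfolding l_def using h by simp
  have T0: "0 < T" using T l0 a unfolding l_def by linarith
  have e: "(\<Sum>j\<in>{- int J..int J}. \<Sum>i<m. h / (real_of_int j * T + a + real i * h)^2)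
     = (\<Sum>i<m. h / (a + real i * h)^2) + (\<Sum>jj\<in>{1..J}. (\<Sum>i<m. h / ((real jj * T + a) + real i * h)^2) + (\<Sum>i<m. h / ((real jj * T - a) - real i * h)^2))"
  proof -
    have "(\<Sum>i<m. h / (real_of_int (- int jj) * T + a + real i * h)^2) = (\<Sum>i<m. h / ((real jj * T - a) - real i * h)^2)" for jj
      by (intro sum.cong) (auto simp: power2_eq_square algebra_simps)
    then show ?thesis by (subst sum_int_symm) (simp add: add_ac)
  qed
  have t0: "ph l a \<le> (\<Sum>i<m. h / (a + real i * h)^2)"
    using riem_inc[OF a h(1), of m] unfolding ph_def l_def by simp
  have t1: "ph l (real jj * T + a) + ph l (real jj * T - a - l + h0)
      \<le> (\<Sum>i<m. h / ((real jj * T + a) + real i * h)^2) + (\<Sum>i<m. h / ((real jj * T - a) - real i * h)^2)"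
    if jj: "jj \<in> {1..J}" for jj
  proof -
    have jT: "T \<le> real jj * T" using jj T0 by auto
    have p1: "0 < real jj * T + a" using jT T0 a by linarith
    have A: "ph l (real jj * T + a) \<le> (\<Sum>i<m. h / ((real jj * T + a) + real i * h)^2)"
      using riem_inc[OF p1 h(1), of m] unfolding ph_def l_def by simp
    have p2: "0 < (real jj * T - a) - real m * h + h" using jT T h(1) by linarith
    have B0: "1/((real jj * T - a) - real m * h + h) - 1/((real jj * T - a) + h) \<le> (\<Sum>i<m. h / ((real jj * T - a) - real i * h)^2)"
      by (rule riem_dec[OF h(1) p2])
    have "ph l (real jj * T - a - l + h) = 1/((real jj * T - a) - real m * h + h) - 1/((real jj * T - a) + h)"
      unfolding ph_def l_def by (simp add: algebra_simps)
    moreover have "ph l (real jj * T - a - l + h0) \<le> ph l (real jj * T - a - l + h)"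
      using p2 h l0 unfolding l_def by (intro ph_mono) auto
    ultimately show ?thesis using A B0 by linarith
  qed
  have "(\<Sum>jj\<in>{1..J}. ph l (real jj * T + a) + ph l (real jj * T - a - l + h0))
     \<le> (\<Sum>jj\<in>{1..J}. (\<Sum>i<m. h / ((real jj * T + a) + real i * h)^2) + (\<Sum>i<m. h / ((real jj * T - a) - real i * h)^2))"
    by (rule sum_mono[OF t1])
  then show ?thesis unfolding e l_def[symmetric] using t0 by linarith
qed

definition SS :: "int \<Rightarrow> real" where
  "SS d = (\<Sum>j\<in>{- int JJ..int JJ}. if j = 0 \<and> d = 0 then 0 else 1/(real_of_int j * TT + real_of_int d)^2)"

lemma SS_eq: "SS d = (if d = 0 then 0 else 1/(real_of_int d)^2) + (\<Sum>jj\<in>{1..JJ}. 1/(real jj * TT + real_of_int d)^2 + 1/(real jj * TT - real_of_int d)^2)"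
proof -
  have "(\<Sum>jj\<in>{1..JJ}. (if int jj = 0 \<and> d = 0 then 0 else 1/(real_of_int (int jj) * TT + real_of_int d)^2)
          + (if - int jj = 0 \<and> d = 0 then 0 else 1/(real_of_int (- int jj) * TT + real_of_int d)^2))
      = (\<Sum>jj\<in>{1..JJ}. 1/(real jj * TT + real_of_int d)^2 + 1/(real jj * TT - real_of_int d)^2)"
    by (intro sum.cong) (auto simp: power2_eq_square algebra_simps)
  then show ?thesis unfolding SS_def by (subst sum_int_symm) simp
qed

lemma split_12: "(\<Sum>jj\<in>{1..J}. f jj) = f 1 + f 2 + (\<Sum>jj\<in>{Suc 2..J}. (f jj :: real))" if "2 \<le> J" for J
proof -
  have "{1..J} = insert 1 (insert 2 {Suc 2..J})" using that by auto
  then show ?thesis by simp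
qed

definition DB :: "nat \<Rightarrow> real" where
  "DB m = (\<Sum>u<m. \<Sum>v<m. if v = u then 0 else 1/(real v - real u)^2)"

lemma DB_ge: assumes "2*D \<le> m"
  shows "real (m - 2*D) * (2 * (\<Sum>d\<in>{1..D}. 1/(real d)^2)) \<le> DB m"
proof -
  define f where "f u v = (if v = u then 0 else 1/(real v - real u)^2)" for u v :: nat
  have f0: "0 \<le> f u v" for u v unfolding f_def by simp
  have inner: "2 * (\<Sum>d\<in>{1..D}. 1/(real d)^2) \<le> (\<Sum>v<m. f u v)" if u: "u \<in> {D..<m-D}" for u
  proof -
    have A: "(\<lambda>d. u + d) ` {1..D} \<subseteq> {..<m}" using u by auto
    have B: "(\<lambda>d. u - d) ` {1..D} \<subseteq> {..<m}" using u by auto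
    have disj: "(\<lambda>d. u + d) ` {1..D} \<inter> (\<lambda>d. u - d) ` {1..D} = {}" using u by auto
    have injA: "inj_on (\<lambda>d. u + d) {1..D}" by (auto simp: inj_on_def)
    have injB: "inj_on (\<lambda>d. u - d) {1..D}" using u by (auto simp: inj_on_def)
    have sA: "(\<Sum>v\<in>(\<lambda>d. u + d) ` {1..D}. f u v) = (\<Sum>d\<in>{1..D}. 1/(real d)^2)"
      by (subst sum.reindex[OF injA]) (auto simp: f_def intro!: sum.cong)
    have sB: "(\<Sum>v\<in>(\<lambda>d. u - d) ` {1..D}. f u v) = (\<Sum>d\<in>{1..D}. 1/(real d)^2)"
    proof (subst sum.reindex[OF injB], intro sum.cong refl)
      fix d assume d: "d \<in> {1..D}"
      then have "real (u - d) - real u = - real d" using u by (simp add: of_nat_diff)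
      then show "(f u \<circ> (\<lambda>d. u - d)) d = 1/(real d)^2" using d unfolding f_def by auto
    qed
    have "(\<Sum>v\<in>(\<lambda>d. u + d) ` {1..D} \<union> (\<lambda>d. u - d) ` {1..D}. f u v) \<le> (\<Sum>v<m. f u v)"
      using A B by (intro sum_mono2) (auto simp: f0)
    moreover have "(\<Sum>v\<in>(\<lambda>d. u + d) ` {1..D} \<union> (\<lambda>d. u - d) ` {1..D}. f u v) = 2 * (\<Sum>d\<in>{1..D}. 1/(real d)^2)"
      by (subst sum.union_disjoint) (use disj sA sB in auto)
    ultimately show ?thesis by simp
  qed
  have "real (m - 2*D) * (2 * (\<Sum>d\<in>{1..D}. 1/(real d)^2)) = (\<Sum>u\<in>{D..<m-D}. 2 * (\<Sum>d\<in>{1..D}. 1/(real d)^2))"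
    using assms by simp
  also have "\<dots> \<le> (\<Sum>u\<in>{D..<m-D}. \<Sum>v<m. f u v)" by (intro sum_mono inner)
  also have "\<dots> \<le> (\<Sum>u<m. \<Sum>v<m. f u v)" by (intro sum_mono2) (auto intro!: sum_nonneg simp: f0)
  finally show ?thesis unfolding DB_def f_def .
qed

lemma G0_LL: assumes "r < 5" "r' < 5"
  shows "G0 j r r' = bw r * bw r' / (real_of_int j * TT + real_of_int (int r' - int r))^2"
  using assms by (simp add: G0_def gapv_def wv_def posv_def algebra_simps)

lemma G0_LD: assumes "r < 5"
  shows "G0 j r (5 + i) = bw r * gw i * (hh / (real_of_int j * TT + (5 - real r) + real i * hh)^2)"
proof -
  have s: "hh powr (1/2) = sqrt hh" using hh_pos by (simp add: powr_half_sqrt)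
  have "sqrt hh * sqrt hh = hh" using hh_pos by simp
  then show ?thesis using assms unfolding G0_def gapv_def wv_def posv_def
    by (simp add: algebra_simps s)
qed

lemma hh_pow: "hh powr (2 - 1/2) * hh powr (1/2) = hh^2"
proof -
  have "hh powr (2 - 1/2) * hh powr (1/2) = hh powr ((2 - 1/2) + 1/2)" by (rule powr_add[symmetric])
  also have "\<dots> = hh powr (real 2)" by simp
  also have "\<dots> = hh^2" using hh_pos by (rule powr_realpow)
  finally show ?thesis .
qed

lemma G0_DD: assumes "u \<noteq> v"
  shows "G0 0 (5 + u) (5 + v) = hh * gw u * gw v / (real v - real u)^2"
proof -
  have ss: "sqrt hh * sqrt hh = hh" using hh_pos by simp
  have d: "(posv (5 + v) - posv (5 + u))^2 = hh^2 * (real v - real u)^2"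
    by (simp add: posv_def power2_eq_square algebra_simps)
  have "G0 0 (5 + u) (5 + v) = hh^2 * (sqrt hh * gw u) * (sqrt hh * gw v) / (hh^2 * (real v - real u)^2)"
    unfolding G0_def using d by (simp add: gapv_def wv_def hh_pow[symmetric] mult.assoc)
  also have "\<dots> = hh * gw u * gw v / (real v - real u)^2"
    using hh_pos assms ss by (simp add: field_simps)
  finally show ?thesis .
qed

definition LDS :: "real \<Rightarrow> nat \<Rightarrow> real" where
  "LDS a m = (\<Sum>j\<in>{- int JJ..int JJ}. \<Sum>i<m. hh / (real_of_int j * TT + a + real i * hh)^2)"

definition Hs :: "nat \<Rightarrow> nat \<Rightarrow> real" where
  "Hs r r' = (\<Sum>j\<in>{- int JJ..int JJ}. F0 (j, r, r'))"

lemma F0_nonneg: "0 \<le> F0 y" unfolding F0_def using G0_nonneg by (auto split: prod.split)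
lemma Hs_nonneg: "0 \<le> Hs r r'" unfolding Hs_def by (intro sum_nonneg F0_nonneg)

lemma Phi_Hs: "Phi = (\<Sum>r<MM. \<Sum>r'<MM. Hs r r')"
proof -
  have "Phi = (\<Sum>j\<in>{- int JJ..int JJ}. \<Sum>p\<in>{..<MM} \<times> {..<MM}. F0 (j, p))"
    unfolding Phi_def XX_def by (subst sum.cartesian_product) (simp add: case_prod_eta)
  also have "\<dots> = (\<Sum>j\<in>{- int JJ..int JJ}. \<Sum>r<MM. \<Sum>r'<MM. F0 (j, r, r'))"
    by (intro sum.cong refl, subst sum.cartesian_product) (simp add: case_prod_eta)
  also have "\<dots> = (\<Sum>r<MM. \<Sum>j\<in>{- int JJ..int JJ}. \<Sum>r'<MM. F0 (j, r, r'))"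
    by (rule sum.swap)
  also have "\<dots> = (\<Sum>r<MM. \<Sum>r'<MM. Hs r r')"
    unfolding Hs_def by (intro sum.cong refl, rule sum.swap)
  finally show ?thesis .
qed

lemma Hs_LL: assumes "r < 5" "r' < 5" shows "Hs r r' = bw r * bw r' * SS (int r' - int r)"
proof -
  have "Hs r r' = (\<Sum>j\<in>{- int JJ..int JJ}. bw r * bw r' * (if j = 0 \<and> int r' - int r = 0 then 0 else 1/(real_of_int j * TT + real_of_int (int r' - int r))^2))"
    unfolding Hs_def F0_def using assms by (intro sum.cong refl) (auto simp: G0_LL)
  then show ?thesis unfolding SS_def by (simp add: sum_distrib_left)
qed

lemma Hs_LD: assumes "r < 5"
  shows "Hs r (5 + i) = bw r * gw i * (\<Sum>j\<in>{- int JJ..int JJ}. hh / (real_of_int j * TT + (5 - real r) + real i * hh)^2)"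
  unfolding Hs_def F0_def using assms by (simp add: G0_LD sum_distrib_left)

lemma Hs_DD: "F0 (0, 5 + u, 5 + v) = (if v = u then 0 else hh * gw u * gw v / (real v - real u)^2)"
  unfolding F0_def using G0_DD by auto

lemma piece_LDS:
  assumes g: "\<And>i. a \<le> i \<Longrightarrow> i < a + m \<Longrightarrow> gw i = g" and s: "real a * hh = s"
  shows "(\<Sum>i\<in>{a..<a+m}. gw i * (\<Sum>j\<in>{- int JJ..int JJ}. hh / (real_of_int j * TT + (5 - real r) + real i * hh)^2))
         = g * LDS (5 + s - real r) m"
proof -
  have "(\<Sum>i\<in>{a..<a+m}. gw i * (\<Sum>j\<in>{- int JJ..int JJ}. hh / (real_of_int j * TT + (5 - real r) + real i * hh)^2))
     = (\<Sum>i\<in>{0..<m}. gw (i + a) * (\<Sum>j\<in>{- int JJ..int JJ}. hh / (real_of_int j * TT + (5 - real r) + real (i + a) * hh)^2))"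
  proof -
    have sh: "\<And>f. sum f {a..<a+m} = (\<Sum>i\<in>{0..<m}. f (i + a))"
      using sum.shift_bounds_nat_ivl[of _ 0 a m] by (simp add: add.commute)
    show ?thesis by (simp only: sh)
  qed
  also have "\<dots> = (\<Sum>i<m. g * (\<Sum>j\<in>{- int JJ..int JJ}. hh / (real_of_int j * TT + (5 + s - real r) + real i * hh)^2))"
  proof (rule sum.cong)
    fix i assume i: "i \<in> {..<m}"
    have "real (i + a) * hh = real i * hh + s" using s by (simp add: algebra_simps)
    then have e: "real_of_int j * TT + (5 - real r) + real (i + a) * hh = real_of_int j * TT + (5 + s - real r) + real i * hh" for j
      by (simp add: algebra_simps)
    have "gw (i + a) = g" using g i by simp
    then show "gw (i + a) * (\<Sum>j\<in>{- int JJ..int JJ}. hh / (real_of_int j * TT + (5 - real r) + real (i + a) * hh)^2)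
        = g * (\<Sum>j\<in>{- int JJ..int JJ}. hh / (real_of_int j * TT + (5 + s - real r) + real i * hh)^2)"
      by (simp only: e)
  qed (simp add: atLeast0LessThan)
  also have "\<dots> = g * LDS (5 + s - real r) m"
    unfolding LDS_def sum_distrib_left[symmetric] by (simp add: sum.swap[of _ "{..<m}"])
  finally show ?thesis .
qed

lemma LD_row: assumes r: "r < 5"
  shows "(\<Sum>i<10*nn. Hs r (5+i)) = bw r * (9201/10000 * LDS (5 - real r) (2*nn) + 1989/2500 * LDS (5 + 6/25 - real r) (6*nn) + 9201/10000 * LDS (5 + 24/25 - real r) (2*nn))"
proof -
  define X where "X i = (\<Sum>j\<in>{- int JJ..int JJ}. hh / (real_of_int j * TT + (5 - real r) + real i * hh)^2)" for i
  have "(\<Sum>i<10*nn. Hs r (5+i)) = bw r * (\<Sum>i<10*nn. gw i * X i)"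
    unfolding X_def using r by (simp add: Hs_LD sum_distrib_left mult.assoc)
  also have "(\<Sum>i<10*nn. gw i * X i) = (\<Sum>i\<in>{0..<0+2*nn}. gw i * X i) + (\<Sum>i\<in>{2*nn..<2*nn+6*nn}. gw i * X i) + (\<Sum>i\<in>{8*nn..<8*nn+2*nn}. gw i * X i)"
    by (simp add: sum.atLeastLessThan_concat atLeast0LessThan[symmetric])
  also have "(\<Sum>i\<in>{0..<0+2*nn}. gw i * X i) = 9201/10000 * LDS (5 + 0 - real r) (2*nn)"
    unfolding X_def by (rule piece_LDS) (auto simp: gw_def)
  also have "(\<Sum>i\<in>{2*nn..<2*nn+6*nn}. gw i * X i) = 1989/2500 * LDS (5 + 6/25 - real r) (6*nn)"
    unfolding X_def by (rule piece_LDS[OF _ len2]) (auto simp: gw_def)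
  also have "(\<Sum>i\<in>{8*nn..<8*nn+2*nn}. gw i * X i) = 9201/10000 * LDS (5 + 24/25 - real r) (2*nn)"
    unfolding X_def by (rule piece_LDS[OF _ len8]) (auto simp: gw_def)
  finally show ?thesis by simp
qed

lemma piece_DB:
  assumes g: "\<And>i. a \<le> i \<Longrightarrow> i < a + m \<Longrightarrow> gw i = g"
  shows "(\<Sum>u\<in>{a..<a+m}. \<Sum>v\<in>{a..<a+m}. F0 (0, 5 + u, 5 + v)) = hh * g^2 * DB m"
proof -
  have "(\<Sum>u\<in>{a..<a+m}. \<Sum>v\<in>{a..<a+m}. F0 (0, 5 + u, 5 + v)) = (\<Sum>u\<in>{0..<m}. \<Sum>v\<in>{0..<m}. F0 (0, 5 + (u + a), 5 + (v + a)))"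
  proof -
    have sh: "\<And>f. sum f {a..<a+m} = (\<Sum>i\<in>{0..<m}. f (i + a))"
      using sum.shift_bounds_nat_ivl[of _ 0 a m] by (simp add: add.commute)
    show ?thesis by (simp only: sh)
  qed
  also have "\<dots> = (\<Sum>u<m. \<Sum>v<m. hh * g^2 * (if v = u then 0 else 1/(real v - real u)^2))"
    unfolding Hs_DD using g by (intro sum.cong) (auto simp: power2_eq_square atLeast0LessThan)
  also have "\<dots> = hh * g^2 * DB m" unfolding DB_def by (simp add: sum_distrib_left)
  finally show ?thesis .
qed

lemma DD_ge: "hh * ((9201/10000)^2 * DB (2*nn) + (1989/2500)^2 * DB (6*nn) + (9201/10000)^2 * DB (2*nn))
   \<le> (\<Sum>u<10*nn. \<Sum>v<10*nn. F0 (0, 5 + u, 5 + v))"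
proof -
  define A where "A u = (\<Sum>v<10*nn. F0 (0, 5 + u, 5 + v))" for u
  have sub: "(\<Sum>v\<in>{a..<a+m}. F0 (0, 5 + u, 5 + v)) \<le> A u" if "a + m \<le> 10*nn" for a m u
    unfolding A_def using that by (intro sum_mono2) (auto simp: F0_nonneg)
  have "(\<Sum>u<10*nn. A u) = (\<Sum>u\<in>{0..<0+2*nn}. A u) + (\<Sum>u\<in>{2*nn..<2*nn+6*nn}. A u) + (\<Sum>u\<in>{8*nn..<8*nn+2*nn}. A u)"
    by (simp add: sum.atLeastLessThan_concat atLeast0LessThan[symmetric])
  moreover have "hh * (9201/10000)^2 * DB (2*nn) \<le> (\<Sum>u\<in>{0..<0+2*nn}. A u)"
  proof -
    have "hh * (9201/10000)^2 * DB (2*nn) = (\<Sum>u\<in>{0..<0+2*nn}. \<Sum>v\<in>{0..<0+2*nn}. F0 (0, 5 + u, 5 + v))"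
      by (rule piece_DB[symmetric]) (auto simp: gw_def)
    also have "\<dots> \<le> (\<Sum>u\<in>{0..<0+2*nn}. A u)" by (intro sum_mono sub) auto
    finally show ?thesis .
  qed
  moreover have "hh * (1989/2500)^2 * DB (6*nn) \<le> (\<Sum>u\<in>{2*nn..<2*nn+6*nn}. A u)"
  proof -
    have "hh * (1989/2500)^2 * DB (6*nn) = (\<Sum>u\<in>{2*nn..<2*nn+6*nn}. \<Sum>v\<in>{2*nn..<2*nn+6*nn}. F0 (0, 5 + u, 5 + v))"
      by (rule piece_DB[symmetric]) (auto simp: gw_def)
    also have "\<dots> \<le> (\<Sum>u\<in>{2*nn..<2*nn+6*nn}. A u)" by (intro sum_mono sub) auto
    finally show ?thesis .
  qed
  moreover have "hh * (9201/10000)^2 * DB (2*nn) \<le> (\<Sum>u\<in>{8*nn..<8*nn+2*nn}. A u)"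
  proof -
    have "hh * (9201/10000)^2 * DB (2*nn) = (\<Sum>u\<in>{8*nn..<8*nn+2*nn}. \<Sum>v\<in>{8*nn..<8*nn+2*nn}. F0 (0, 5 + u, 5 + v))"
      by (rule piece_DB[symmetric]) (auto simp: gw_def)
    also have "\<dots> \<le> (\<Sum>u\<in>{8*nn..<8*nn+2*nn}. A u)" by (intro sum_mono sub) auto
    finally show ?thesis .
  qed
  ultimately show ?thesis unfolding A_def[symmetric] by (simp add: algebra_simps)
qed

lemma Phi_ge:
  "(\<Sum>r<5. \<Sum>r'<5. bw r * bw r' * SS (int r' - int r))
   + (\<Sum>r<5. bw r * (9201/10000 * LDS (5 - real r) (2*nn) + 1989/2500 * LDS (5 + 6/25 - real r) (6*nn) + 9201/10000 * LDS (5 + 24/25 - real r) (2*nn)))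
   + hh * ((9201/10000)^2 * DB (2*nn) + (1989/2500)^2 * DB (6*nn) + (9201/10000)^2 * DB (2*nn)) \<le> Phi"
proof -
  have M: "MM = 5 + (10*nn + 1)" by (simp add: MM_def)
  define A where "A r = (\<Sum>r'<MM. Hs r r')" for r
  have A0: "0 \<le> A r" for r unfolding A_def by (intro sum_nonneg Hs_nonneg)
  have rowL: "(\<Sum>r'<5. Hs r r') + (\<Sum>i<10*nn. Hs r (5+i)) \<le> A r" for r
  proof -
    have "A r = (\<Sum>r'\<in>{0..<5}. Hs r r') + (\<Sum>r'\<in>{5..<MM}. Hs r r')"
      unfolding A_def using sum.atLeastLessThan_concat[of 0 5 MM "Hs r"] MM_ge by (simp add: atLeast0LessThan)
    moreover have "(\<Sum>i<10*nn. Hs r (5+i)) \<le> (\<Sum>r'\<in>{5..<MM}. Hs r r')"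
    proof -
      have "(\<Sum>i<10*nn. Hs r (5+i)) = (\<Sum>r'\<in>{5..<5 + 10*nn}. Hs r r')"
        using sum.shift_bounds_nat_ivl[of "Hs r" 0 5 "10*nn"] by (simp add: atLeast0LessThan add.commute)
      also have "\<dots> \<le> (\<Sum>r'\<in>{5..<MM}. Hs r r')" unfolding M by (intro sum_mono2) (auto simp: Hs_nonneg)
      finally show ?thesis .
    qed
    ultimately show ?thesis by (simp add: atLeast0LessThan)
  qed
  have rowD: "(\<Sum>v<10*nn. F0 (0, 5 + u, 5 + v)) \<le> A (5 + u)" for u
  proof -
    have "(\<Sum>v<10*nn. F0 (0, 5 + u, 5 + v)) \<le> (\<Sum>v<10*nn. Hs (5 + u) (5 + v))"
      unfolding Hs_def by (intro sum_mono member_le_sum) (auto simp: F0_nonneg)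
    also have "\<dots> = (\<Sum>r'\<in>{5..<5 + 10*nn}. Hs (5+u) r')"
      using sum.shift_bounds_nat_ivl[of "Hs (5+u)" 0 5 "10*nn"] by (simp add: atLeast0LessThan add.commute)
    also have "\<dots> \<le> A (5 + u)" unfolding A_def M by (intro sum_mono2) (auto simp: Hs_nonneg)
    finally show ?thesis .
  qed
  have "Phi = (\<Sum>r\<in>{0..<5}. A r) + (\<Sum>r\<in>{5..<MM}. A r)"
    unfolding Phi_Hs A_def[symmetric] using sum.atLeastLessThan_concat[of 0 5 MM A] MM_ge by (simp add: atLeast0LessThan)
  moreover have "(\<Sum>u<10*nn. A (5 + u)) \<le> (\<Sum>r\<in>{5..<MM}. A r)"
  proof -
    have "(\<Sum>u<10*nn. A (5 + u)) = (\<Sum>r\<in>{5..<5 + 10*nn}. A r)"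
      using sum.shift_bounds_nat_ivl[of A 0 5 "10*nn"] by (simp add: atLeast0LessThan add.commute)
    also have "\<dots> \<le> (\<Sum>r\<in>{5..<MM}. A r)" unfolding M by (intro sum_mono2) (auto simp: A0)
    finally show ?thesis .
  qed
  moreover have "(\<Sum>r\<in>{0..<5}. (\<Sum>r'<5. Hs r r') + (\<Sum>i<10*nn. Hs r (5+i))) \<le> (\<Sum>r\<in>{0..<5}. A r)"
    by (intro sum_mono rowL)
  moreover have "(\<Sum>u<10*nn. \<Sum>v<10*nn. F0 (0, 5 + u, 5 + v)) \<le> (\<Sum>u<10*nn. A (5 + u))"
    by (intro sum_mono rowD)
  moreover have "(\<Sum>r\<in>{0..<5}. (\<Sum>r'<5. Hs r r') + (\<Sum>i<10*nn. Hs r (5+i)))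
     = (\<Sum>r<5. \<Sum>r'<5. bw r * bw r' * SS (int r' - int r))
       + (\<Sum>r<5. bw r * (9201/10000 * LDS (5 - real r) (2*nn) + 1989/2500 * LDS (5 + 6/25 - real r) (6*nn) + 9201/10000 * LDS (5 + 24/25 - real r) (2*nn)))"
  proof -
    have e1: "(\<Sum>r\<in>{0..<5}. \<Sum>r'<5. Hs r r') = (\<Sum>r<5. \<Sum>r'<5. bw r * bw r' * SS (int r' - int r))"
      by (intro sum.cong) (auto simp: Hs_LL)
    have e2: "(\<Sum>r\<in>{0..<5}. \<Sum>i<10*nn. Hs r (5+i)) = (\<Sum>r<5. bw r * (9201/10000 * LDS (5 - real r) (2*nn) + 1989/2500 * LDS (5 + 6/25 - real r) (6*nn) + 9201/10000 * LDS (5 + 24/25 - real r) (2*nn)))"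
      by (intro sum.cong) (auto simp: LD_row simp del: of_nat_numeral)
    show ?thesis unfolding sum.distrib e1 e2 ..
  qed
  ultimately show ?thesis using DD_ge by linarith
qed

lemma SS_lower:
  fixes d :: int and th1 th2 :: real
  assumes a1: "0 \<le> th1" "0 \<le> TT - 2*th1" "0 < 3 * TT + real_of_int d - th1"
      "(3 * TT + real_of_int d)^2 \<le> (3 * TT + real_of_int d - th1) * (3 * TT + real_of_int d - th1 + TT)"
    and a2: "0 \<le> th2" "0 \<le> TT - 2*th2" "0 < 3 * TT - real_of_int d - th2"
      "(3 * TT - real_of_int d)^2 \<le> (3 * TT - real_of_int d - th2) * (3 * TT - real_of_int d - th2 + TT)"
  shows "(if d = 0 then 0 else 1/(real_of_int d)^2)
     + (1/(TT + real_of_int d)^2 + 1/(TT - real_of_int d)^2)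
     + (1/(2*TT + real_of_int d)^2 + 1/(2*TT - real_of_int d)^2)
     + 1/TT * (1/(3*TT + real_of_int d - th1) - 1/(real (Suc JJ) * TT + real_of_int d - th1))
     + 1/TT * (1/(3*TT - real_of_int d - th2) - 1/(real (Suc JJ) * TT - real_of_int d - th2)) \<le> SS d"
proof -
  have T: "0 < TT" by (simp add: TT_def)
  have J: "2 \<le> JJ" by (simp add: JJ_def)
  have t1: "1/TT * (1/(real (Suc 2) * TT + real_of_int d - th1) - 1/(real (Suc JJ) * TT + real_of_int d - th1))
      \<le> (\<Sum>jj\<in>{Suc 2..JJ}. 1/(real jj * TT + real_of_int d)^2)"
    using a1 J by (intro tail_sq[OF T]) (auto simp: numeral_eq_Suc)
  have t2: "1/TT * (1/(real (Suc 2) * TT + (- real_of_int d) - th2) - 1/(real (Suc JJ) * TT + (- real_of_int d) - th2))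
      \<le> (\<Sum>jj\<in>{Suc 2..JJ}. 1/(real jj * TT + (- real_of_int d))^2)"
    using a2 J by (intro tail_sq[OF T]) (auto simp: numeral_eq_Suc)
  have e: "SS d = (if d = 0 then 0 else 1/(real_of_int d)^2)
     + (1/(TT + real_of_int d)^2 + 1/(TT - real_of_int d)^2)
     + (1/(2*TT + real_of_int d)^2 + 1/(2*TT - real_of_int d)^2)
     + (\<Sum>jj\<in>{Suc 2..JJ}. 1/(real jj * TT + real_of_int d)^2)
     + (\<Sum>jj\<in>{Suc 2..JJ}. 1/(real jj * TT + (- real_of_int d))^2)"
    unfolding SS_eq split_12[OF J] by (simp add: sum.distrib)
  show ?thesis unfolding e using t1 t2 by (simp add: numeral_eq_Suc)
qed

lemma "53294502/100000000 \<le> SS 1"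
  by (rule order_trans[OF _ SS_lower[of "3293/1000" 1 "32791/10000"]]) (simp_all add: TT_def JJ_def power2_eq_square)

lemma LDS_lower:
  fixes a l th1 th2 :: real and m :: nat
  assumes m: "real m * hh = l" and a: "0 < a" "l + a < TT"
    and a1: "0 \<le> th1" "0 \<le> TT - 2*th1 - l" "0 < 3 * TT + a - th1"
      "(3 * TT + a) * (3 * TT + a + l) \<le> (3 * TT + a - th1) * (3 * TT + a - th1 + TT)"
    and a2: "0 \<le> th2" "0 \<le> TT - 2*th2 - l" "0 < 3 * TT + (- a - l + 1/10^7) - th2"
      "(3 * TT + (- a - l + 1/10^7)) * (3 * TT + (- a - l + 1/10^7) + l) \<le> (3 * TT + (- a - l + 1/10^7) - th2) * (3 * TT + (- a - l + 1/10^7) - th2 + TT)"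
  shows "ph l a
     + (ph l (TT + a) + ph l (TT + (- a - l + 1/10^7)))
     + (ph l (2*TT + a) + ph l (2*TT + (- a - l + 1/10^7)))
     + l/TT * (1/(3*TT + a - th1) - 1/(real (Suc JJ) * TT + a - th1))
     + l/TT * (1/(3*TT + (- a - l + 1/10^7) - th2) - 1/(real (Suc JJ) * TT + (- a - l + 1/10^7) - th2)) \<le> LDS a m"
proof -
  have T: "0 < TT" by (simp add: TT_def)
  have J: "2 \<le> JJ" by (simp add: JJ_def)
  have l0: "0 \<le> l" using m hh_pos by (metis of_nat_0_le_iff mult_nonneg_nonneg less_imp_le)
  define c2 where "c2 = - a - l + 1/10^7"
  have G: "ph l a + (\<Sum>jj\<in>{1..JJ}. ph l (real jj * TT + a) + ph l (real jj * TT + c2)) \<le> LDS a m"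
  proof -
    have "ph (real m * hh) a + (\<Sum>jj\<in>{1..JJ}. ph (real m * hh) (real jj * TT + a) + ph (real m * hh) (real jj * TT - a - real m * hh + 1/10^7))
      \<le> (\<Sum>j\<in>{- int JJ..int JJ}. \<Sum>i<m. hh / (real_of_int j * TT + a + real i * hh)^2)"
      using hh_pos hh_small a m by (intro LD_generic) auto
    moreover have "(\<Sum>jj\<in>{1..JJ}. ph l (real jj * TT + a) + ph l (real jj * TT - a - l + 1/10^7))
        = (\<Sum>jj\<in>{1..JJ}. ph l (real jj * TT + a) + ph l (real jj * TT + c2))"
      unfolding c2_def by (intro sum.cong refl) (simp add: algebra_simps)
    ultimately show ?thesis unfolding m LDS_def by simp
  qed
  have t1: "l/TT * (1/(real (Suc 2) * TT + a - th1) - 1/(real (Suc JJ) * TT + a - th1))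
      \<le> (\<Sum>jj\<in>{Suc 2..JJ}. 1/(real jj * TT + a) - 1/(real jj * TT + a + l))"
    using a1 J l0 by (intro tail_phi[OF T]) (auto simp: numeral_eq_Suc)
  have t2: "l/TT * (1/(real (Suc 2) * TT + c2 - th2) - 1/(real (Suc JJ) * TT + c2 - th2))
      \<le> (\<Sum>jj\<in>{Suc 2..JJ}. 1/(real jj * TT + c2) - 1/(real jj * TT + c2 + l))"
    using a2 J l0 unfolding c2_def[symmetric] by (intro tail_phi[OF T]) (auto simp: numeral_eq_Suc)
  have e: "(\<Sum>jj\<in>{1..JJ}. ph l (real jj * TT + a) + ph l (real jj * TT + c2))
     = (ph l (TT + a) + ph l (TT + c2)) + (ph l (2*TT + a) + ph l (2*TT + c2))
       + (\<Sum>jj\<in>{Suc 2..JJ}. 1/(real jj * TT + a) - 1/(real jj * TT + a + l))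
       + (\<Sum>jj\<in>{Suc 2..JJ}. 1/(real jj * TT + c2) - 1/(real jj * TT + c2 + l))"
    unfolding split_12[OF J] by (simp add: sum.distrib ph_def)
  show ?thesis using G t1 t2 unfolding e c2_def[symmetric] by (simp add: numeral_eq_Suc)
qed

lemma len6: "real (6*nn) * hh = 18/25" using nn_pos by (simp add: hh_def)

lemma SS_inst_m4: "24528591/125000000 \<le> SS (-4)"
  by (rule order_trans[OF _ SS_lower[of "8061/2500" "(-4)" "16709/5000"]]) (simp_all add: TT_def JJ_def power2_eq_square)

lemma SS_inst_m3: "203984879/1000000000 \<le> SS (-3)"
  by (rule order_trans[OF _ SS_lower[of "16223/5000" "(-3)" "33313/10000"]]) (simp_all add: TT_def JJ_def power2_eq_square)

lemma SS_inst_m2: "324368489/1000000000 \<le> SS (-2)"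
  by (rule order_trans[OF _ SS_lower[of "32627/10000" "(-2)" "33199/10000"]]) (simp_all add: TT_def JJ_def power2_eq_square)

lemma SS_inst_m1: "532945023/500000000 \<le> SS (-1)"
  by (rule order_trans[OF _ SS_lower[of "32791/10000" "(-1)" "1323/400"]]) (simp_all add: TT_def JJ_def power2_eq_square)

lemma SS_inst_0: "3962463/62500000 \<le> SS 0"
  by (rule order_trans[OF _ SS_lower[of "1647/500" "0" "1647/500"]]) (simp_all add: TT_def JJ_def power2_eq_square)

lemma SS_inst_1: "532945023/500000000 \<le> SS 1"
  by (rule order_trans[OF _ SS_lower[of "1323/400" "1" "32791/10000"]]) (simp_all add: TT_def JJ_def power2_eq_square)

lemma SS_inst_2: "324368489/1000000000 \<le> SS 2"
  by (rule order_trans[OF _ SS_lower[of "33199/10000" "2" "32627/10000"]]) (simp_all add: TT_def JJ_def power2_eq_square)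

lemma SS_inst_3: "203984879/1000000000 \<le> SS 3"
  by (rule order_trans[OF _ SS_lower[of "33313/10000" "3" "16223/5000"]]) (simp_all add: TT_def JJ_def power2_eq_square)

lemma SS_inst_4: "24528591/125000000 \<le> SS 4"
  by (rule order_trans[OF _ SS_lower[of "16709/5000" "4" "8061/2500"]]) (simp_all add: TT_def JJ_def power2_eq_square)

lemma LD_inst_0_0: "36876647/500000000 \<le> LDS (5) (2*nn)"
  by (rule order_trans[OF _ LDS_lower[OF len2, of "5" "32317/10000" "7691/2500"]]) (simp_all add: TT_def JJ_def ph_def)

lemma LD_inst_0_1: "43351109/125000000 \<le> LDS (131/25) (6*nn)"
  by (rule order_trans[OF _ LDS_lower[OF len6, of "131/25" "14981/5000" "3527/1250"]]) (simp_all add: TT_def JJ_def ph_def)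

lemma LD_inst_0_2: "26189277/125000000 \<le> LDS (149/25) (2*nn)"
  by (rule order_trans[OF _ LDS_lower[OF len2, of "149/25" "8101/2500" "1907/625"]]) (simp_all add: TT_def JJ_def ph_def)

lemma LD_inst_1_0: "24080019/500000000 \<le> LDS (4) (2*nn)"
  by (rule order_trans[OF _ LDS_lower[OF len2, of "4" "1611/500" "7749/2500"]]) (simp_all add: TT_def JJ_def ph_def)

lemma LD_inst_1_1: "16913041/100000000 \<le> LDS (106/25) (6*nn)"
  by (rule order_trans[OF _ LDS_lower[OF len6, of "106/25" "29867/10000" "28467/10000"]]) (simp_all add: TT_def JJ_def ph_def)

lemma LD_inst_1_2: "35897557/500000000 \<le> LDS (124/25) (2*nn)"
  by (rule order_trans[OF _ LDS_lower[OF len2, of "124/25" "16157/5000" "15387/5000"]]) (simp_all add: TT_def JJ_def ph_def)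

lemma LD_inst_2_0: "47789257/1000000000 \<le> LDS (3) (2*nn)"
  by (rule order_trans[OF _ LDS_lower[OF len2, of "3" "8029/2500" "7801/2500"]]) (simp_all add: TT_def JJ_def ph_def)

lemma LD_inst_2_1: "138159793/1000000000 \<le> LDS (81/25) (6*nn)"
  by (rule order_trans[OF _ LDS_lower[OF len6, of "81/25" "5953/2000" "2869/1000"]]) (simp_all add: TT_def JJ_def ph_def)

lemma LD_inst_2_2: "9557529/200000000 \<le> LDS (99/25) (2*nn)"
  by (rule order_trans[OF _ LDS_lower[OF len2, of "99/25" "4027/1250" "6201/2000"]]) (simp_all add: TT_def JJ_def ph_def)

lemma LD_inst_3_0: "35900077/500000000 \<le> LDS (2) (2*nn)"
  by (rule order_trans[OF _ LDS_lower[OF len2, of "2" "16001/5000" "31389/10000"]]) (simp_all add: TT_def JJ_def ph_def)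

lemma LD_inst_3_1: "169141373/1000000000 \<le> LDS (56/25) (6*nn)"
  by (rule order_trans[OF _ LDS_lower[OF len6, of "56/25" "5931/2000" "28889/10000"]]) (simp_all add: TT_def JJ_def ph_def)

lemma LD_inst_3_2: "12040443/250000000 \<le> LDS (74/25) (2*nn)"
  by (rule order_trans[OF _ LDS_lower[OF len2, of "74/25" "32111/10000" "31211/10000"]]) (simp_all add: TT_def JJ_def ph_def)

lemma LD_inst_4_0: "13095197/62500000 \<le> LDS (1) (2*nn)"
  by (rule order_trans[OF _ LDS_lower[OF len2, of "1" "15939/5000" "31557/10000"]]) (simp_all add: TT_def JJ_def ph_def)

lemma LD_inst_4_1: "346831683/1000000000 \<le> LDS (31/25) (6*nn)"
  by (rule order_trans[OF _ LDS_lower[OF len6, of "31/25" "5907/2000" "7267/2500"]]) (simp_all add: TT_def JJ_def ph_def)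

lemma LD_inst_4_2: "18439621/250000000 \<le> LDS (49/25) (2*nn)"
  by (rule order_trans[OF _ LDS_lower[OF len2, of "49/25" "31997/10000" "7849/2500"]]) (simp_all add: TT_def JJ_def ph_def)

definition sv :: "int \<Rightarrow> real" where
  "sv d = (if d = 0 then 3962463/62500000 else if d = 1 \<or> d = -1 then 532945023/500000000
     else if d = 2 \<or> d = -2 then 324368489/1000000000 else if d = 3 \<or> d = -3 then 203984879/1000000000
     else 24528591/125000000)"

lemma sv_le: assumes "-4 \<le> d" "d \<le> 4" shows "sv d \<le> SS d"
proof -
  have "d = -4 \<or> d = -3 \<or> d = -2 \<or> d = -1 \<or> d = 0 \<or> d = 1 \<or> d = 2 \<or> d = 3 \<or> d = 4" using assms by linarith
  then show ?thesis
    using SS_inst_m4 SS_inst_m3 SS_inst_m2 SS_inst_m1 SS_inst_0 SS_inst_1 SS_inst_2 SS_inst_3 SS_inst_4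
    by (elim disjE) (simp_all add: sv_def)
qed

definition LLlow :: real where "LLlow = (\<Sum>r<5. \<Sum>r'<5. bw r * bw r' * sv (int r' - int r))"

lemma LL_ge: "LLlow \<le> (\<Sum>r<5. \<Sum>r'<5. bw r * bw r' * SS (int r' - int r))"
  unfolding LLlow_def using bw_nonneg
  by (intro sum_mono mult_left_mono sv_le) (auto intro: mult_nonneg_nonneg)

definition ldrow :: "nat \<Rightarrow> real" where
  "ldrow r = (if r = 0 then 9201/10000 * (36876647/500000000) + 1989/2500 * (43351109/125000000) + 9201/10000 * (26189277/125000000)
    else if r = 1 then 9201/10000 * (24080019/500000000) + 1989/2500 * (16913041/100000000) + 9201/10000 * (35897557/500000000)
    else if r = 2 then 9201/10000 * (47789257/1000000000) + 1989/2500 * (138159793/1000000000) + 9201/10000 * (9557529/200000000)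
    else if r = 3 then 9201/10000 * (35900077/500000000) + 1989/2500 * (169141373/1000000000) + 9201/10000 * (12040443/250000000)
    else 9201/10000 * (13095197/62500000) + 1989/2500 * (346831683/1000000000) + 9201/10000 * (18439621/250000000))"

lemma ldrow_le: assumes "r < 5"
  shows "ldrow r \<le> 9201/10000 * LDS (5 - real r) (2*nn) + 1989/2500 * LDS (5 + 6/25 - real r) (6*nn) + 9201/10000 * LDS (5 + 24/25 - real r) (2*nn)"
proof -
  have "r = 0 \<or> r = 1 \<or> r = 2 \<or> r = 3 \<or> r = 4" using assms by linarith
  then show ?thesis
  proof (elim disjE)
    assume "r = 0" then show ?thesis using LD_inst_0_0 LD_inst_0_1 LD_inst_0_2 by (simp add: ldrow_def)
  next
    assume "r = 1" then show ?thesis using LD_inst_1_0 LD_inst_1_1 LD_inst_1_2 by (simp add: ldrow_def)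
  next
    assume "r = 2" then show ?thesis using LD_inst_2_0 LD_inst_2_1 LD_inst_2_2 by (simp add: ldrow_def)
  next
    assume "r = 3" then show ?thesis using LD_inst_3_0 LD_inst_3_1 LD_inst_3_2 by (simp add: ldrow_def)
  next
    assume "r = 4" then show ?thesis using LD_inst_4_0 LD_inst_4_1 LD_inst_4_2 by (simp add: ldrow_def)
  qed
qed

lemma DB_low: assumes "2 * 10^6 \<le> m"
  shows "hh * real (m - 2 * 10^6) * (pi^2/3 - 2/10^6) \<le> hh * DB m"
proof -
  have z: "pi^2/6 - 1/real (10^6::nat) \<le> (\<Sum>d\<in>{1..10^6}. 1/(real d)^2)" by (rule zeta2_partial) simp
  have "real (m - 2 * 10^6) * (2 * (pi^2/6 - 1/real (10^6::nat))) \<le> real (m - 2 * 10^6) * (2 * (\<Sum>d\<in>{1..10^6}. 1/(real d)^2))"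
    using z by (intro mult_left_mono) auto
  also have "\<dots> \<le> DB m" using DB_ge[of "10^6" m] assms by simp
  finally have "real (m - 2 * 10^6) * (pi^2/3 - 2/10^6) \<le> DB m" by (simp add: algebra_simps)
  then show ?thesis using hh_pos by (simp add: mult.assoc mult_left_mono)
qed

lemma hh2D: "hh * real (2*nn - 2 * 10^6) = 6/25 - 6/(25*10^7)"
proof -
  have "real (2*nn - 2 * 10^6) = real (2*nn) - 2*10^6" by (simp add: nn_def)
  then show ?thesis using len2 by (simp add: algebra_simps hh_def nn_def)
qed

lemma hh6D: "hh * real (6*nn - 2 * 10^6) = 18/25 - 6/(25*10^7)"
proof -
  have "real (6*nn - 2 * 10^6) = real (6*nn) - 2*10^6" by (simp add: nn_def)
  then show ?thesis using len6 by (simp add: algebra_simps hh_def nn_def)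
qed

definition DDlow :: real where
  "DDlow = (9201/10000)^2 * ((6/25 - 6/(25*10^7)) * (pi^2/3 - 2/10^6)) + (1989/2500)^2 * ((18/25 - 6/(25*10^7)) * (pi^2/3 - 2/10^6)) + (9201/10000)^2 * ((6/25 - 6/(25*10^7)) * (pi^2/3 - 2/10^6))"

lemma DD_low: "DDlow \<le> hh * ((9201/10000)^2 * DB (2*nn) + (1989/2500)^2 * DB (6*nn) + (9201/10000)^2 * DB (2*nn))"
proof -
  have a: "(6/25 - 6/(25*10^7)) * (pi^2/3 - 2/10^6) \<le> hh * DB (2*nn)"
  proof -
    have "2 * 10^6 \<le> 2*nn" by (simp add: nn_def)
    from DB_low[OF this] show ?thesis unfolding hh2D .
  qed
  have b: "(18/25 - 6/(25*10^7)) * (pi^2/3 - 2/10^6) \<le> hh * DB (6*nn)"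
  proof -
    have "2 * 10^6 \<le> 6*nn" by (simp add: nn_def)
    from DB_low[OF this] show ?thesis unfolding hh6D .
  qed
  have "DDlow = (9201/10000)^2 * ((6/25 - 6/(25*10^7)) * (pi^2/3 - 2/10^6)) + (1989/2500)^2 * ((18/25 - 6/(25*10^7)) * (pi^2/3 - 2/10^6)) + (9201/10000)^2 * ((6/25 - 6/(25*10^7)) * (pi^2/3 - 2/10^6))"
    unfolding DDlow_def by (rule refl)
  also have "\<dots> \<le> (9201/10000)^2 * (hh * DB (2*nn)) + (1989/2500)^2 * (hh * DB (6*nn)) + (9201/10000)^2 * (hh * DB (2*nn))"
    using a b by (intro add_mono mult_left_mono) auto
  finally show ?thesis by (simp add: algebra_simps)
qed

lemma LD_low: "(\<Sum>r<5. bw r * ldrow r) \<le> (\<Sum>r<5. bw r * (9201/10000 * LDS (5 - real r) (2*nn) + 1989/2500 * LDS (5 + 6/25 - real r) (6*nn) + 9201/10000 * LDS (5 + 24/25 - real r) (2*nn)))"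
  by (intro sum_mono mult_left_mono ldrow_le bw_nonneg) auto

lemma Phi_low: "LLlow + (\<Sum>r<5. bw r * ldrow r) + DDlow \<le> Phi"
  using Phi_ge LL_ge LD_low DD_low by linarith

lemma card_Qw: "card Qw = KK - 2*JJ - 1" unfolding Qw_def by (simp add: KK_def JJ_def)

lemma LL_val: "LLlow = 2065604170567087/6250000000000000"
  by (simp add: LLlow_def sv_def bw_def eval_nat_numeral)

lemma LD_val: "(\<Sum>r<5. bw r * ldrow r) = 2926842413872527/10000000000000000"
  by (simp add: ldrow_def bw_def eval_nat_numeral)

lemma DD_val: "DDlow = 1796052933692631/6250000000000000 * pi^2 - 5388158801077893/3125000000000000000000"
  by (simp add: DDlow_def power2_eq_square field_simps)

lemma sigma_pos: "0 < sigma_val" by (simp add: sigma_val_def power2_eq_square)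
lemma sigma_val_eq: "sigma_val = 249988251/250000000" by (simp add: sigma_val_def power2_eq_square)

lemma final_num: "35047/100000 * pi^2 * (real KK * sigma_val) \<le> real (KK - 2*JJ - 1) * (LLlow + (\<Sum>r<5. bw r * ldrow r) + DDlow)"
proof -
  have p0: "0 \<le> pi" by simp
  have p: "pi^2 \<le> (31415926535899/10^13)^2" using pi_approx(2) p0 by (intro power_mono) auto
  have Q: "real (KK - 2*JJ - 1) = 10^13 - 2*10^6 - 1" by (simp add: KK_def JJ_def)
  define P where "P = pi^2"
  have e: "real (KK - 2*JJ - 1) * (LLlow + (\<Sum>r<5. bw r * ldrow r) + DDlow) - 35047/100000 * pi^2 * (real KK * sigma_val)
     = 19474345619727220741304320878890393/3125000000000000000000 - 3942819837173853438195692631/6250000000000000 * P"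
    unfolding LL_val LD_val DD_val sigma_val_eq Q P_def by (simp add: KK_def algebra_simps)
  have "3942819837173853438195692631/6250000000000000 * P \<le> 3942819837173853438195692631/6250000000000000 * (31415926535899/10^13)^2"
    using p unfolding P_def by (intro mult_left_mono) auto
  also have "\<dots> \<le> 19474345619727220741304320878890393/3125000000000000000000" by (simp add: power2_eq_square)
  finally show ?thesis using e by linarith
qed

lemma stepv_pos: "0 < stepv r" using hh_pos by (simp add: stepv_def)

lemma lamc_succ: "lamc k < lamc (k + 1)" using lamc_step[of k] stepv_pos[of "nat (k mod int MM)"] by linarith

lemma lamc_strict: "strict_mono lamc"
proof (rule strict_monoI)
  fix x y :: int assume "x < y"
  then obtain n where y: "y = x + 1 + int n" by (metis add.assoc zless_iff_Suc_zadd add.commute of_nat_Suc)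
  have "lamc x < lamc (x + 1 + int n)"
  proof (induction n)
    case 0 then show ?case using lamc_succ by simp
  next
    case (Suc n)
    have "lamc (x + 1 + int n) < lamc (x + 1 + int n + 1)" by (rule lamc_succ)
    then show ?case using Suc by (simp add: add.assoc)
  qed
  then show "lamc x < lamc y" using y by simp
qed

lemma admissible_ge: assumes "admissible_const (1/2) C" shows "35047/100000 * pi^2 \<le> C"
proof -
  have N1: "1 \<le> NN" using MM_ge by (simp add: NN_def KK_def)
  have t0: "\<forall>n\<in>{1..NN}. 0 \<le> tc n" using tc_nonneg by simp
  have A: "(\<Sum>m=1..NN. \<Sum>n\<in>{1..NN}-{m}. Gt m n) \<le> C * (\<Sum>n=1..NN. (tc n)^2)"
    using assms N1 lamc_strict t0 unfolding admissible_const_def Gt_def by blast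
  have "35047/100000 * pi^2 * (real KK * sigma_val) \<le> real (card Qw) * Phi"
  proof -
    have "0 \<le> real (card Qw)" by simp
    then have "real (card Qw) * (LLlow + (\<Sum>r<5. bw r * ldrow r) + DDlow) \<le> real (card Qw) * Phi"
      using Phi_low by (rule mult_left_mono[rotated])
    then show ?thesis using final_num unfolding card_Qw by linarith
  qed
  also have "\<dots> \<le> C * (real KK * sigma_val)" using LHS_ge A unfolding sum_tc2 by linarith
  finally have "35047/100000 * pi^2 * (real KK * sigma_val) \<le> C * (real KK * sigma_val)" .
  moreover have "0 < real KK * sigma_val" using sigma_pos by (simp add: KK_def)
  ultimately show ?thesis by (rule mult_right_le_imp_le)
qed

theorem theorem5:
  shows "Cbar (1/2) \<ge> ereal (0.35047 * pi^2)"
  unfolding Cbar_def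
proof (rule Inf_greatest)
  fix x assume "x \<in> {ereal C | C. admissible_const (1/2) C}"
  then obtain C where x: "x = ereal C" and C: "admissible_const (1/2) C" by auto
  have "0.35047 * pi^2 \<le> C" using admissible_ge[OF C] by simp
  then show "ereal (0.35047 * pi^2) \<le> x" unfolding x by simp
qed

end
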